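(* Let $R$ be a unital ring with involution and let $a,b\in R$ both be core invertible. Then the following are equivalent: (1) $a\overset{\circledast}{\leq} b$; (2) $a\ {*}\!\leq b$ and $ba^{\circledast}b=a$; (3) $a\ {*}\!\leq b$ and $b^{\circledast}aa^{\circledast}=a^{\circledast}$; (4) $a\ {*}\!\leq b$ and $b^{\circledast}ab^{\circledast}=a^{\circledast}$; (5) $a\leq_{\#} b$ and $ba^{\circledast}b=a$; (6) $a\leq_{\#} b$ and $a^{\circledast}ab^{\circledast}=a^{\circledast}$.
   Context: $R$ is a ring with identity and an involution $x\mapsto x^{*}$. An element $a\in R$ is core invertible if there exists $x\in R$ with $axa=a$, $xR=aR$ and $Rx=Ra^{*}$; such $x$ is unique, called the core inverse of $a$ and denoted $a^{\circledast}$. Every core invertible element $a$ is group invertible, where the group inverse $a^{\#}$ is the unique $x$ with $axa=a$, $xax=x$, $ax=xa$. For $a$ core invertible and $b\in R$, $a\overset{\circledast}{\leq} b$ means $a^{\circledast}a=a^{\circledast}b$ and $aa^{\circledast}=ba^{\circledast}$. The left star partial order: $a\ {*}\!\leq b$ means $a^{*}a=a^{*}b$ and $aR\subseteq bR$. The right sharp partial order (for group invertible $a$): $a\leq_{\#} b$ means $aa^{\#}=ba^{\#}$ and $Ra\subseteq Rb$. *)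

theory Defs
  imports Main
begin

class ring_inv = ring_1 +
  fixes invol :: "'a \<Rightarrow> 'a"  ("_\<^sup>\<star>" [1000] 999)
  assumes invol_invol: "(x\<^sup>\<star>)\<^sup>\<star> = x"
    and invol_add: "(x + y)\<^sup>\<star> = x\<^sup>\<star> + y\<^sup>\<star>"
    and invol_mult: "(x * y)\<^sup>\<star> = y\<^sup>\<star> * x\<^sup>\<star>"

definition right_ideal :: "'a::ring_1 \<Rightarrow> 'a set" where
  "right_ideal a = {a * r | r. True}"

definition left_ideal :: "'a::ring_1 \<Rightarrow> 'a set" where
  "left_ideal a = {r * a | r. True}"

definition is_core_inverse :: "'a::ring_inv \<Rightarrow> 'a \<Rightarrow> bool" where
  "is_core_inverse a x \<longleftrightarrow> a * x * a = a \<and> right_ideal x = right_ideal a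
      \<and> left_ideal x = left_ideal (a\<^sup>\<star>)"

definition core_invertible :: "'a::ring_inv \<Rightarrow> bool" where
  "core_invertible a \<longleftrightarrow> (\<exists>x. is_core_inverse a x)"

definition core_inv :: "'a::ring_inv \<Rightarrow> 'a" where
  "core_inv a = (THE x. is_core_inverse a x)"

definition is_group_inverse :: "'a::ring_1 \<Rightarrow> 'a \<Rightarrow> bool" where
  "is_group_inverse a x \<longleftrightarrow> a * x * a = a \<and> x * a * x = x \<and> a * x = x * a"

definition group_inv :: "'a::ring_1 \<Rightarrow> 'a" where
  "group_inv a = (THE x. is_group_inverse a x)"

definition core_le :: "'a::ring_inv \<Rightarrow> 'a \<Rightarrow> bool" where
  "core_le a b \<longleftrightarrow> core_inv a * a = core_inv a * b \<and> a * core_inv a = b * core_inv a"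

definition left_star_le :: "'a::ring_inv \<Rightarrow> 'a \<Rightarrow> bool" where
  "left_star_le a b \<longleftrightarrow> a\<^sup>\<star> * a = a\<^sup>\<star> * b \<and> right_ideal a \<subseteq> right_ideal b"

definition right_sharp_le :: "'a::ring_1 \<Rightarrow> 'a \<Rightarrow> bool" where
  "right_sharp_le a b \<longleftrightarrow> a * group_inv a = b * group_inv a \<and> left_ideal a \<subseteq> left_ideal b"

end

theory Submission
  imports Defs
begin

lemma inv_mult3: "(p*q*r)\<^sup>\<star> = r\<^sup>\<star> * q\<^sup>\<star> * p\<^sup>\<star>" for p q r :: "'a::ring_inv"
  by (simp add: invol_mult mult.assoc)

lemma core_props:
  fixes a x :: "'a::ring_inv"
  assumes "is_core_inverse a x"
  shows "a*x*a = a" "x*a*x = x" "(a*x)\<^sup>\<star> = a*x" "x*a*a = a" "a*x*x = x"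
proof -
  have axa: "a*x*a = a" using assms by (simp add: is_core_inverse_def)
  have "x \<in> right_ideal x" unfolding right_ideal_def by (auto intro: exI[of _ 1])
  then have "x \<in> right_ideal a" using assms by (simp add: is_core_inverse_def)
  then obtain u where u: "x = a*u" unfolding right_ideal_def by auto
  have "a \<in> right_ideal a" unfolding right_ideal_def by (auto intro: exI[of _ 1])
  then have "a \<in> right_ideal x" using assms by (simp add: is_core_inverse_def)
  then obtain v where v: "a = x*v" unfolding right_ideal_def by auto
  have "x \<in> left_ideal x" unfolding left_ideal_def by (auto intro: exI[of _ 1])
  then have "x \<in> left_ideal (a\<^sup>\<star>)" using assms by (simp add: is_core_inverse_def)
  then obtain w where w: "x = w*a\<^sup>\<star>" unfolding left_ideal_def by auto
  have as: "a\<^sup>\<star> = a\<^sup>\<star> * x\<^sup>\<star> * a\<^sup>\<star>" using inv_mult3[of a x a] axa by simp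
  have x1: "x = x * x\<^sup>\<star> * a\<^sup>\<star>"
  proof -
    have "x = w*(a\<^sup>\<star> * x\<^sup>\<star> * a\<^sup>\<star>)" using w as by simp
    also have "\<dots> = x * x\<^sup>\<star> * a\<^sup>\<star>" using w by (simp add: mult.assoc)
    finally show ?thesis .
  qed
  have h0: "a*x = (a*x)*(a*x)\<^sup>\<star>"
  proof -
    have "a*x = a*(x * x\<^sup>\<star> * a\<^sup>\<star>)" using x1 by simp
    also have "\<dots> = (a*x)*(a*x)\<^sup>\<star>" by (simp add: invol_mult mult.assoc)
    finally show ?thesis .
  qed
  have herm: "(a*x)\<^sup>\<star> = a*x"
  proof -
    have "(a*x)\<^sup>\<star> = ((a*x)*(a*x)\<^sup>\<star>)\<^sup>\<star>" using h0 by simp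
    also have "\<dots> = (a*x)*(a*x)\<^sup>\<star>" by (simp add: invol_mult invol_invol)
    finally show ?thesis using h0 by simp
  qed
  have "x*a*x = x * (a*x)\<^sup>\<star>" using herm by (simp add: mult.assoc)
  also have "\<dots> = x" using x1 by (simp add: invol_mult mult.assoc)
  finally have xax: "x*a*x = x" .
  have "x*a*a = x*a*x*v" using v by (simp add: mult.assoc)
  also have "\<dots> = a" using xax v by simp
  finally have xaa: "x*a*a = a" .
  have "a*x*x = a*x*a*u" using u by (simp add: mult.assoc)
  also have "\<dots> = x" using axa u by simp
  finally have axx: "a*x*x = x" .
  show "a*x*a = a" "x*a*x = x" "(a*x)\<^sup>\<star> = a*x" "x*a*a = a" "a*x*x = x"
    using axa xax herm xaa axx by auto
qed

lemma core_unique: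
  fixes a x y :: "'a::ring_inv"
  assumes "is_core_inverse a x" "is_core_inverse a y"
  shows "x = y"
proof -
  note X = core_props[OF assms(1)] and Y = core_props[OF assms(2)]
  have "(a*x)\<^sup>\<star> = (a*y*a*x)\<^sup>\<star>" using Y(1) by simp
  also have "\<dots> = (a*x)\<^sup>\<star> * (a*y)\<^sup>\<star>" by (simp add: invol_mult mult.assoc)
  also have "\<dots> = a*x*a*y" using X(3) Y(3) by (simp add: mult.assoc)
  also have "\<dots> = a*y" using X(1) by simp
  finally have axy: "a*x = a*y" using X(3) by simp
  have "x = x*a*y" using X(2) axy by (metis mult.assoc)
  also have "\<dots> = x*a*a*y*y" using Y(5) by (metis mult.assoc)
  also have "\<dots> = y" using X(4) Y(5) by simp
  finally show ?thesis .
qed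

lemma core_inv_props:
  fixes a :: "'a::ring_inv"
  assumes "core_invertible a"
  defines "x \<equiv> core_inv a"
  shows "a*x*a = a" "x*a*x = x" "(a*x)\<^sup>\<star> = a*x" "x*a*a = a" "a*x*x = x"
proof -
  obtain z where z: "is_core_inverse a z" using assms core_invertible_def by blast
  have "is_core_inverse a x" unfolding x_def core_inv_def
    by (rule theI[of _ z]) (use z core_unique in auto)
  from core_props[OF this] show "a*x*a = a" "x*a*x = x" "(a*x)\<^sup>\<star> = a*x" "x*a*a = a" "a*x*x = x"
    by auto
qed

lemma group_unique:
  fixes a g h :: "'a::ring_1"
  assumes "is_group_inverse a g" "is_group_inverse a h"
  shows "g = h"
proof -
  have g1: "a*g*a = a" "g*a*g = g" "a*g = g*a" and h1: "a*h*a = a" "h*a*h = h" "a*h = h*a"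
    using assms by (auto simp: is_group_inverse_def)
  have "g = g*g*a" using g1 by (metis mult.assoc)
  also have "\<dots> = g*g*a*h*a" using h1 by (metis mult.assoc)
  also have "\<dots> = g*a*h" using g1 h1 by (metis mult.assoc)
  finally have e1: "g = g*a*h" .
  have "h = a*h*h" using h1 by (metis mult.assoc)
  also have "\<dots> = a*g*a*h*h" using g1 by simp
  also have "\<dots> = a*g*h" using h1 by (metis mult.assoc)
  finally have "h = g*a*h" using g1 by simp
  with e1 show ?thesis by simp
qed

lemma group_inv_core:
  fixes a :: "'a::ring_inv"
  assumes "core_invertible a"
  shows "group_inv a = core_inv a * core_inv a * a"
proof -
  define x where "x = core_inv a"
  note P = core_inv_props[OF assms, folded x_def]
  have ag: "a*(x*x*a) = x*a" using P(5) by (metis mult.assoc)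
  have ga: "(x*x*a)*a = x*a" using P(4) by (metis mult.assoc)
  have "is_group_inverse a (x*x*a)" unfolding is_group_inverse_def
  proof (intro conjI)
    show "a*(x*x*a)*a = a" using ag P(4) by simp
    show "x*x*a*a*(x*x*a) = x*x*a" using ga P(2) by (metis mult.assoc)
    show "a*(x*x*a) = x*x*a*a" using ag ga by simp
  qed
  then have "group_inv a = x*x*a" unfolding group_inv_def
    by (rule the_equality) (metis group_unique \<open>is_group_inverse a (x*x*a)\<close>)
  then show ?thesis by (simp add: x_def)
qed


lemma ls_xb:
  fixes a b :: "'a::ring_inv"
  assumes "core_invertible a" "left_star_le a b"
  shows "core_inv a * b = core_inv a * a"
proof -
  define x where "x = core_inv a"
  note P = core_inv_props[OF assms(1), folded x_def]
  have s: "a\<^sup>\<star>*a = a\<^sup>\<star>*b" using assms(2) by (simp add: left_star_le_def)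
  have x1: "x = x * (a*x)\<^sup>\<star>" using P(2,3) by (simp add: mult.assoc)
  have "x*b = x*x\<^sup>\<star>*(a\<^sup>\<star>*b)" using x1 by (metis invol_mult mult.assoc)
  also have "\<dots> = x*x\<^sup>\<star>*(a\<^sup>\<star>*a)" using s by simp
  also have "\<dots> = x*a" using x1 by (metis invol_mult mult.assoc)
  finally show ?thesis by (simp add: x_def)
qed

theorem theorem3p2:
  fixes a b :: "'a::ring_inv"
  assumes "core_invertible a" and "core_invertible b"
  shows "(core_le a b \<longleftrightarrow> left_star_le a b \<and> b * core_inv a * b = a)
    \<and> (core_le a b \<longleftrightarrow> left_star_le a b \<and> core_inv b * a * core_inv a = core_inv a)
    \<and> (core_le a b \<longleftrightarrow> left_star_le a b \<and> core_inv b * a * core_inv b = core_inv a)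
    \<and> (core_le a b \<longleftrightarrow> right_sharp_le a b \<and> b * core_inv a * b = a)
    \<and> (core_le a b \<longleftrightarrow> right_sharp_le a b \<and> core_inv a * a * core_inv b = core_inv a)"
proof -
  define x where "x = core_inv a"
  define y where "y = core_inv b"
  note P = core_inv_props[OF assms(1), folded x_def]
  note Q = core_inv_props[OF assms(2), folded y_def]
  have gi: "group_inv a = x*x*a" using group_inv_core[OF assms(1)] by (simp add: x_def)
  have aga: "a * group_inv a = x*a" using gi P(5) by (metis mult.assoc)
  have xs: "x = x*x\<^sup>\<star>*a\<^sup>\<star>" using P(2,3) by (metis invol_mult mult.assoc)
  have as: "a\<^sup>\<star> = a\<^sup>\<star>*a*x"
    using P(1,3) by (metis invol_mult mult.assoc)
  have le: "core_le a b \<longleftrightarrow> x*a = x*b \<and> a*x = b*x" by (auto simp: core_le_def x_def)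
  have LS: "left_star_le a b \<Longrightarrow> x*b = x*a" using ls_xb[OF assms(1)] by (simp add: x_def)
  have RS: "right_sharp_le a b \<Longrightarrow> b*x = a*x"
  proof -
    assume r: "right_sharp_le a b"
    then have "x*a = b*(x*x*a)" using aga gi by (simp add: right_sharp_le_def)
    then have "x*a*a = b*x*(x*a*a)" by (metis mult.assoc)
    then have "a = b*x*a" using P(4) by simp
    then have "a*x = b*x*(a*x)" by (metis mult.assoc)
    then show "b*x = a*x" using P(2) by (metis mult.assoc)
  qed
  have LSb: "left_star_le a b \<Longrightarrow> b*y*a = a"
  proof -
    assume "left_star_le a b"
    moreover have "a \<in> right_ideal a" unfolding right_ideal_def by (auto intro: exI[of _ 1])
    ultimately have "a \<in> right_ideal b" by (auto simp: left_star_le_def)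
    then obtain r where r: "a = b*r" by (auto simp: right_ideal_def)
    show "b*y*a = a" using r Q(1) by (metis mult.assoc)
  qed
  have RSb: "right_sharp_le a b \<Longrightarrow> a*y*b = a"
  proof -
    assume "right_sharp_le a b"
    moreover have "a \<in> left_ideal a" unfolding left_ideal_def by (auto intro: exI[of _ 1])
    ultimately have "a \<in> left_ideal b" by (auto simp: right_sharp_le_def)
    then obtain r where r: "a = r*b" by (auto simp: left_ideal_def)
    show "a*y*b = a" using r Q(1) by (metis mult.assoc)
  qed
  have F: "x*a = x*b \<Longrightarrow> a*x = b*x \<Longrightarrow>
      left_star_le a b \<and> b*x*b = a \<and> y*a*x = x \<and> y*a*y = x \<and> right_sharp_le a b \<and> x*a*y = x"
  proof -
    assume 1: "x*a = x*b" and 2: "a*x = b*x"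
    have bxa: "b*x*a = a" using 2 P(1) by simp
    have lsl: "left_star_le a b" unfolding left_star_le_def
    proof
      have "a\<^sup>\<star>*b = a\<^sup>\<star>*a*(x*b)" using as by (metis mult.assoc)
      also have "\<dots> = a\<^sup>\<star>*a" using 1 as by (metis mult.assoc)
      finally show "a\<^sup>\<star>*a = a\<^sup>\<star>*b" by simp
      show "right_ideal a \<subseteq> right_ideal b" unfolding right_ideal_def
        using bxa by (auto simp: mult.assoc) (metis mult.assoc)
    qed
    have rsl: "right_sharp_le a b" unfolding right_sharp_le_def
    proof
      show "a * group_inv a = b * group_inv a" using gi 2 by (metis mult.assoc)
      have "a*x*b = a" using 1 P(1) by (metis mult.assoc)
      then show "left_ideal a \<subseteq> left_ideal b" unfolding left_ideal_def
        by auto (metis mult.assoc)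
    qed
    have bxb: "b*x*b = a" using 1 2 P(1) by (metis mult.assoc)
    have xbx: "x = b*x*x" using 2 P(5) by simp
    have yax: "y*a*x = x"
    proof -
      have "y*a*x = y*b*b*x*x" using 2 xbx by (metis mult.assoc)
      also have "\<dots> = x" using Q(4) xbx by (metis mult.assoc)
      finally show ?thesis .
    qed
    have xay: "x*a*y = x"
    proof -
      have bya: "b*y*a = a" using LSb[OF lsl] .
      have "a\<^sup>\<star>*(b*y) = a\<^sup>\<star>*(b*y)\<^sup>\<star>" using Q(3) by simp
      also have "\<dots> = (b*y*a)\<^sup>\<star>" by (simp add: invol_mult)
      finally have aby: "a\<^sup>\<star>*b*y = a\<^sup>\<star>" using bya by (simp add: mult.assoc)
      have "x*a*y = x*b*y" using 1 by simp
      also have "\<dots> = x*x\<^sup>\<star>*(a\<^sup>\<star>*b*y)" using xs by (metis mult.assoc)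
      also have "\<dots> = x" using aby xs by simp
      finally show ?thesis .
    qed
    have yay: "y*a*y = x"
    proof -
      have "y*a*y = y*b*x*a*y" using bxa by (metis mult.assoc)
      also have "\<dots> = x*a*y" using yax 2 by (metis mult.assoc)
      finally show ?thesis using xay by simp
    qed
    show ?thesis using lsl rsl bxb yax yay xay by simp
  qed
  have B2: "left_star_le a b \<Longrightarrow> b*x*b = a \<Longrightarrow> core_le a b"
  proof -
    assume l: "left_star_le a b" and e: "b*x*b = a"
    have xb: "x*b = x*a" using LS[OF l] .
    have "b*x = b*x*a*x" using P(2) by (metis mult.assoc)
    also have "\<dots> = b*x*b*x" using xb by (metis mult.assoc)
    also have "\<dots> = a*x" using e by simp
    finally show ?thesis using le xb by simp
  qed
  have B3: "left_star_le a b \<Longrightarrow> y*a*x = x \<Longrightarrow> core_le a b"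
  proof -
    assume l: "left_star_le a b" and e: "y*a*x = x"
    have "b*x = b*y*a*x" using e by (metis mult.assoc)
    also have "\<dots> = a*x" using LSb[OF l] by simp
    finally show ?thesis using le LS[OF l] by simp
  qed
  have B4: "left_star_le a b \<Longrightarrow> y*a*y = x \<Longrightarrow> core_le a b"
  proof -
    assume l: "left_star_le a b" and e: "y*a*y = x"
    have bya: "b*y*a = a" using LSb[OF l] .
    have s: "a\<^sup>\<star>*a = a\<^sup>\<star>*b" using l by (simp add: left_star_le_def)
    have "a\<^sup>\<star>*(b*y) = a\<^sup>\<star>*(b*y)\<^sup>\<star>" using Q(3) by simp
    also have "\<dots> = (b*y*a)\<^sup>\<star>" by (simp add: invol_mult)
    finally have aby: "a\<^sup>\<star>*b*y = a\<^sup>\<star>" using bya by (simp add: mult.assoc)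
    have aay: "a\<^sup>\<star>*a*y = a\<^sup>\<star>" using aby s by simp
    have "a*x = x\<^sup>\<star>*a\<^sup>\<star>" using P(3) by (simp add: invol_mult)
    also have "\<dots> = x\<^sup>\<star>*a\<^sup>\<star>*a*y" using aay by (simp add: mult.assoc)
    also have "\<dots> = a*x*a*y" using P(3) by (simp add: invol_mult)
    also have "\<dots> = a*y" using P(1) by simp
    finally have axy: "a*x = a*y" .
    have "b*x = b*y*a*y" using e by (simp add: mult.assoc)
    also have "\<dots> = a*y" using bya by simp
    finally show ?thesis using le LS[OF l] axy by simp
  qed
  have B5: "right_sharp_le a b \<Longrightarrow> b*x*b = a \<Longrightarrow> core_le a b"
  proof -
    assume r: "right_sharp_le a b" and e: "b*x*b = a"
    have bx: "b*x = a*x" using RS[OF r] .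
    have "x*b = x*b*x*b" using P(2) bx by (metis mult.assoc)
    also have "\<dots> = x*a" using e by (metis mult.assoc)
    finally show ?thesis using le bx by simp
  qed
  have B6: "right_sharp_le a b \<Longrightarrow> x*a*y = x \<Longrightarrow> core_le a b"
  proof -
    assume r: "right_sharp_le a b" and e: "x*a*y = x"
    have bx: "b*x = a*x" using RS[OF r] .
    have "x*b = x*(a*y*b)" using e by (metis mult.assoc)
    also have "\<dots> = x*a" using RSb[OF r] by simp
    finally show ?thesis using le bx by simp
  qed
  show ?thesis unfolding x_def[symmetric] y_def[symmetric]
    using F B2 B3 B4 B5 B6 le by blast
qed

end
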